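(* Consider the mass-action system in the concentrations $x_1,\dots,x_6$ with positive reaction rate constants $k_1,\dots,k_6$: \[ \begin{aligned} \dot x_1&=-k_1x_1+k_4x_3x_5, & \dot x_2&=k_1x_1-k_2x_2+k_5x_4x_5, & \dot x_3&=k_2x_2-k_3x_3-k_4x_3x_5,\\ \dot x_4&=k_3x_3-k_5x_4x_5, & \dot x_5&=-k_4x_3x_5-k_5x_4x_5+k_6x_6, & \dot x_6&=k_4x_3x_5+k_5x_4x_5-k_6x_6, \end{aligned} \] with conservation laws $x_1+x_2+x_3+x_4=T_1$, $x_5+x_6=T_2$. Given positive reaction constants $k_1,\dots,k_6$ and positive total conservation constants $T_1,T_2$, there exist positive constants $N_1,N_2,N_3,N_4$ such that for any $\beta_1,\beta_2>0$ satisfying \[ N_1<\beta_1,\quad N_2<\beta_2,\quad \frac{\beta_2}{\beta_1}<N_3,\quad \frac{\beta_1}{\beta_2^2}<N_4, \] after replacing $k_1$ by $\bar k_1=\left(\beta_1\frac{1}{k_1+k_2}-\frac{1}{k_2}\right)^{-1}$ (which is then positive) and $k_6$ by $\bar k_6=\beta_2^{-1}k_6$, without altering $k_2,k_3,k_4,k_5,T_1,T_2$, the system has at least $3$ positive steady states, i.e. at least three points $x\in\mathbb R^6_{>0}$ with all right-hand sides zero, $x_1+x_2+x_3+x_4=T_1$ and $x_5+x_6=T_2$.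
   Context: This is the mass-action system of the hybrid histidine kinase network $X_1\xrightarrow{k_1}X_2\xrightarrow{k_2}X_3\xrightarrow{k_3}X_4$, $X_3+X_5\xrightarrow{k_4}X_1+X_6$, $X_4+X_5\xrightarrow{k_5}X_2+X_6$, $X_6\xrightarrow{k_6}X_5$. *)

theory Defs
  imports Main "HOL.Real"
begin

type_synonym state6 = "real \<times> real \<times> real \<times> real \<times> real \<times> real"

definition hhk_pos_steady ::
  "real \<Rightarrow> real \<Rightarrow> real \<Rightarrow> real \<Rightarrow> real \<Rightarrow> real \<Rightarrow> real \<Rightarrow> real \<Rightarrow> state6 \<Rightarrow> bool" where
  "hhk_pos_steady k1 k2 k3 k4 k5 k6 T1 T2 x =
    (case x of (x1, x2, x3, x4, x5, x6) \<Rightarrow>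
       x1 > 0 \<and> x2 > 0 \<and> x3 > 0 \<and> x4 > 0 \<and> x5 > 0 \<and> x6 > 0 \<and>
       - k1 * x1 + k4 * x3 * x5 = 0 \<and>
       k1 * x1 - k2 * x2 + k5 * x4 * x5 = 0 \<and>
       k2 * x2 - k3 * x3 - k4 * x3 * x5 = 0 \<and>
       k3 * x3 - k5 * x4 * x5 = 0 \<and>
       - k4 * x3 * x5 - k5 * x4 * x5 + k6 * x6 = 0 \<and>
       k4 * x3 * x5 + k5 * x4 * x5 - k6 * x6 = 0 \<and>
       x1 + x2 + x3 + x4 = T1 \<and> x5 + x6 = T2)"

end

theory Submission
  imports Defs Complex_Main
begin

lemma steady_from_root:
  fixes kb1 k2 k3 k4 k5 kb6 T1 T2 s :: real
  assumes "kb1 > 0" "k2 > 0" "k3 > 0" "k4 > 0" "k5 > 0" "kb6 > 0" "T1 > 0" "T2 > 0"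
    and s: "0 < s" "s < T2"
    and root: "kb6 * (T2 - s) * ((k4/kb1 + k4/k2) * s^2 + (1 + k3/k2) * s + k3/k5)
               = T1 * s * (k4 * s + k3)"
  shows "hhk_pos_steady kb1 k2 k3 k4 k5 kb6 T1 T2
     (k4 * (T1 * s / ((k4/kb1 + k4/k2) * s^2 + (1 + k3/k2) * s + k3/k5)) * s / kb1,
      (T1 * s / ((k4/kb1 + k4/k2) * s^2 + (1 + k3/k2) * s + k3/k5)) * (k3 + k4 * s) / k2,
      T1 * s / ((k4/kb1 + k4/k2) * s^2 + (1 + k3/k2) * s + k3/k5),
      k3 * (T1 * s / ((k4/kb1 + k4/k2) * s^2 + (1 + k3/k2) * s + k3/k5)) / (k5 * s),
      s, T2 - s)"
proof -
  define P where "P = (k4/kb1 + k4/k2) * s^2 + (1 + k3/k2) * s + k3/k5"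
  have P: "P > 0" unfolding P_def using assms by (intro add_pos_pos mult_pos_pos) auto
  define x3 where "x3 = T1 * s / P"
  have x3: "x3 > 0" unfolding x3_def using P assms by simp
  have r: "kb6 * (T2 - s) = x3 * (k4 * s + k3)"
    using root P unfolding x3_def P_def[symmetric] by (simp add: field_simps)
  have sum: "k4 * x3 * s / kb1 + x3 * (k3 + k4 * s) / k2 + x3 + k3 * x3 / (k5 * s) = T1"
  proof -
    have "k4 * x3 * s / kb1 + x3 * (k3 + k4 * s) / k2 + x3 + k3 * x3 / (k5 * s) = x3 * P / s"
      unfolding P_def using assms by (simp add: field_simps power2_eq_square)
    also have "\<dots> = T1" unfolding x3_def using P s by simp
    finally show ?thesis .
  qed
  show ?thesis
    unfolding hhk_pos_steady_def P_def[symmetric] x3_def[symmetric] split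
  proof (intro conjI)
    show "k4 * x3 * s / kb1 > 0" "x3 * (k3 + k4 * s) / k2 > 0" "k3 * x3 / (k5 * s) > 0"
      using assms x3 by (auto intro!: divide_pos_pos mult_pos_pos add_pos_pos)
    show "0 < s" "0 < T2 - s" "0 < x3" using assms x3 by auto
    show "- kb1 * (k4 * x3 * s / kb1) + k4 * x3 * s = 0" using assms by simp
    show "kb1 * (k4 * x3 * s / kb1) - k2 * (x3 * (k3 + k4 * s) / k2) + k5 * (k3 * x3 / (k5 * s)) * s = 0"
      using assms by (simp add: field_simps)
    show "k2 * (x3 * (k3 + k4 * s) / k2) - k3 * x3 - k4 * x3 * s = 0"
      using assms by (simp add: field_simps)
    show "k3 * x3 - k5 * (k3 * x3 / (k5 * s)) * s = 0" using assms by (simp add: field_simps)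
    show "- k4 * x3 * s - k5 * (k3 * x3 / (k5 * s)) * s + kb6 * (T2 - s) = 0"
      using assms r by (simp add: field_simps)
    show "k4 * x3 * s + k5 * (k3 * x3 / (k5 * s)) * s - kb6 * (T2 - s) = 0"
      using assms r by (simp add: field_simps)
    show "k4 * x3 * s / kb1 + x3 * (k3 + k4 * s) / k2 + x3 + k3 * x3 / (k5 * s) = T1" by (rule sum)
    show "s + (T2 - s) = T2" by simp
  qed
qed

lemma three_roots:
  fixes g :: "real \<Rightarrow> real"
  assumes cont: "continuous_on {0..T2} g"
    and "0 < s1" "s1 < s2" "s2 < T2"
    and "g 0 > 0" "g s1 < 0" "g s2 > 0" "g T2 < 0"
  shows "\<exists>u v w. 0 < u \<and> u < s1 \<and> s1 < v \<and> v < s2 \<and> s2 < w \<and> w < T2 \<and>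
     g u = 0 \<and> g v = 0 \<and> g w = 0"
proof -
  have c1: "continuous_on {0..s1} g" by (rule continuous_on_subset[OF cont]) (use assms in auto)
  have c2: "continuous_on {s1..s2} g" by (rule continuous_on_subset[OF cont]) (use assms in auto)
  have c3: "continuous_on {s2..T2} g" by (rule continuous_on_subset[OF cont]) (use assms in auto)
  obtain u where u: "0 \<le> u" "u \<le> s1" "g u = 0" using IVT2'[of g s1 0 0] c1 assms by force
  obtain v where v: "s1 \<le> v" "v \<le> s2" "g v = 0" using IVT'[of g s1 0 s2] c2 assms by force
  obtain w where w: "s2 \<le> w" "w \<le> T2" "g w = 0" using IVT2'[of g T2 0 s2] c3 assms by force
  have "u \<noteq> 0" "u \<noteq> s1" "v \<noteq> s1" "v \<noteq> s2" "w \<noteq> s2" "w \<noteq> T2" using u v w assms by auto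
  then show ?thesis using u v w by (intro exI[of _ u] exI[of _ v] exI[of _ w]) auto
qed


theorem proposition3p5:
  fixes k1 k2 k3 k4 k5 k6 T1 T2 :: real
  assumes "k1 > 0" "k2 > 0" "k3 > 0" "k4 > 0" "k5 > 0" "k6 > 0" "T1 > 0" "T2 > 0"
  shows "\<exists>N1 N2 N3 N4 :: real. N1 > 0 \<and> N2 > 0 \<and> N3 > 0 \<and> N4 > 0 \<and>
    (\<forall>\<beta>1 \<beta>2 :: real. \<beta>1 > 0 \<longrightarrow> \<beta>2 > 0 \<longrightarrow>
       N1 < \<beta>1 \<longrightarrow> N2 < \<beta>2 \<longrightarrow> \<beta>2 / \<beta>1 < N3 \<longrightarrow> \<beta>1 / \<beta>2 ^ 2 < N4 \<longrightarrow>
       (let kb1 = inverse (\<beta>1 * (1 / (k1 + k2)) - 1 / k2);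
            kb6 = inverse \<beta>2 * k6
        in kb1 > 0 \<and>
           (\<exists>x y z. distinct [x, y, z] \<and> hhk_pos_steady kb1 k2 k3 k4 k5 kb6 T1 T2 x \<and>
              hhk_pos_steady kb1 k2 k3 k4 k5 kb6 T1 T2 y \<and> hhk_pos_steady kb1 k2 k3 k4 k5 kb6 T1 T2 z)))"
proof -
  define c where "c = k3 / k5"
  define b where "b = 1 + k3 / k2"
  define C1 where "C1 = 2 * k6 * T2 * c / (T1 * k3)"
  have c: "c > 0" unfolding c_def using assms by simp
  have b: "b > 0" unfolding b_def using assms by (simp add: add_pos_pos)
  have C1: "C1 > 0" unfolding C1_def using assms c by simp
  define N1 where "N1 = (k1 + k2) / k2"
  define N2 where "N2 = 2 * b * C1 / c + 2 * C1 / T2"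
  define N3 where "N3 = k6 * k4 * T2^2 / (4 * T1 * (k4 * T2 / 2 + k3) * (k1 + k2))"
  define N4 where "N4 = c * (k1 + k2) / (2 * k4 * C1^2)"
  have "k1 + k2 > 0" using assms by simp
  have pos: "N1 > 0" "N2 > 0" "N3 > 0" "N4 > 0"
    unfolding N1_def N2_def N3_def N4_def using assms b c C1
    by (auto intro!: divide_pos_pos mult_pos_pos add_pos_pos)
  show ?thesis
  proof (rule exI[of _ N1], rule exI[of _ N2], rule exI[of _ N3], rule exI[of _ N4],
      intro conjI allI impI pos)
    fix \<beta>1 \<beta>2 :: real
    assume b1: "\<beta>1 > 0" and b2: "\<beta>2 > 0" and h1: "N1 < \<beta>1" and h2: "N2 < \<beta>2"
      and h3: "\<beta>2 / \<beta>1 < N3" and h4: "\<beta>1 / \<beta>2 ^ 2 < N4"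
    define kb1 where "kb1 = inverse (\<beta>1 * (1 / (k1 + k2)) - 1 / k2)"
    define kb6 where "kb6 = inverse \<beta>2 * k6"
    have d: "\<beta>1 * (1 / (k1 + k2)) - 1 / k2 > 0"
    proof -
      have "(k1 + k2) / k2 < \<beta>1" using h1 unfolding N1_def .
      hence "1 / k2 < \<beta>1 / (k1 + k2)" using assms by (simp add: field_simps)
      thus ?thesis by simp
    qed
    have kb1: "kb1 > 0" unfolding kb1_def using d by simp
    have kb6: "kb6 > 0" unfolding kb6_def using b2 assms by simp
    define a where "a = k4 * \<beta>1 / (k1 + k2)"
    have a: "k4 / kb1 + k4 / k2 = a"
    proof -
      have "k4 / kb1 = k4 * (\<beta>1 * (1 / (k1 + k2)) - 1 / k2)"
        unfolding kb1_def by (simp add: divide_inverse)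
      thus ?thesis unfolding a_def by (simp add: algebra_simps)
    qed
    have apos: "a > 0" unfolding a_def using assms b1 by simp
    have kb6': "kb6 = k6 / \<beta>2" unfolding kb6_def by (simp add: field_simps)
    define g where "g s = kb6 * (T2 - s) * (a * s^2 + b * s + c) - T1 * s * (k4 * s + k3)" for s
    define s1 where "s1 = C1 / \<beta>2"
    have s1: "s1 > 0" unfolding s1_def using C1 b2 by simp
    have hb: "2 * b * C1 / c < \<beta>2" and hT: "2 * C1 / T2 < \<beta>2"
      using h2 b c C1 assms unfolding N2_def
      by (smt (verit) divide_pos_pos mult_pos_pos)+
    have s1T: "s1 < T2 / 2"
      using hT b2 assms unfolding s1_def by (simp add: field_simps)
    have bs1: "b * s1 < c / 2"
      using hb b2 c unfolding s1_def by (simp add: field_simps)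
    have as1: "a * s1^2 < c / 2"
    proof -
      have "a * s1^2 = k4 * C1^2 / (k1 + k2) * (\<beta>1 / \<beta>2 ^ 2)"
        unfolding a_def s1_def by (simp add: field_simps power2_eq_square)
      also have "\<dots> < k4 * C1^2 / (k1 + k2) * N4"
        using h4 assms C1 by (intro mult_strict_left_mono) auto
      also have "\<dots> = c / 2"
      proof -
        define D where "D = k1 + k2"
        have "D \<noteq> 0" "k4 \<noteq> 0" "C1 \<noteq> 0" using assms C1 by (auto simp: D_def)
        then show ?thesis unfolding N4_def D_def[symmetric] by (simp add: field_simps power2_eq_square)
      qed
      finally show ?thesis .
    qed
    have g1: "g s1 < 0"
    proof -
      have P: "a * s1^2 + b * s1 + c < 2 * c" using as1 bs1 by simp
      have Pp: "a * s1^2 + b * s1 + c > 0" using apos b c s1 by (intro add_pos_pos mult_pos_pos) auto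
      have "kb6 * (T2 - s1) * (a * s1^2 + b * s1 + c) < kb6 * T2 * (2 * c)"
      proof -
        have "(T2 - s1) * (a * s1^2 + b * s1 + c) < T2 * (2 * c)"
          using P Pp s1 s1T assms by (intro mult_strict_mono) auto
        thus ?thesis using kb6 by (simp add: mult.assoc)
      qed
      also have "\<dots> = T1 * k3 * s1"
        unfolding kb6' s1_def C1_def using assms b2 by (simp add: field_simps)
      also have "\<dots> \<le> T1 * s1 * (k4 * s1 + k3)"
        using assms s1 by (simp add: algebra_simps)
      finally show ?thesis unfolding g_def by simp
    qed
    have g2: "g (T2 / 2) > 0"
    proof -
      have ka: "kb6 * a > 4 * T1 * (k4 * T2 / 2 + k3) / T2^2"
      proof -
        have e: "kb6 * a = k6 * k4 / (k1 + k2) / (\<beta>2 / \<beta>1)"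
          unfolding kb6' a_def using b1 b2 by (simp add: field_simps)
        have "k6 * k4 / (k1 + k2) / N3 < k6 * k4 / (k1 + k2) / (\<beta>2 / \<beta>1)"
          using h3 b1 b2 assms pos(3) by (intro divide_strict_left_mono) (auto intro!: mult_pos_pos)
        moreover have "k6 * k4 / (k1 + k2) / N3 = 4 * T1 * (k4 * T2 / 2 + k3) / T2^2"
        proof -
          define D where "D = k1 + k2"
          define E where "E = k4 * T2 / 2 + k3"
          have D0: "D \<noteq> 0" using assms by (auto simp: D_def)
          have "k4 * T2 > 0" using assms by simp
          hence "E \<noteq> 0" using assms unfolding E_def by linarith
          then show ?thesis using assms D0 unfolding N3_def D_def[symmetric] E_def[symmetric]
            by (simp add: field_simps power2_eq_square)
        qed
        ultimately show ?thesis using e by simp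
      qed
      have "T1 * (k4 * T2 / 2 + k3) < kb6 * a * (T2/2)^2"
        using ka assms by (simp add: field_simps power2_eq_square)
      also have "\<dots> \<le> kb6 * (a * (T2/2)^2 + b * (T2/2) + c)"
        using kb6 b c assms by (simp add: algebra_simps)
      finally have "T1 * (k4 * T2 / 2 + k3) < kb6 * (a * (T2/2)^2 + b * (T2/2) + c)" .
      hence "(T2/2) * (T1 * (k4 * T2 / 2 + k3)) < (T2/2) * (kb6 * (a * (T2/2)^2 + b * (T2/2) + c))"
        using assms by (intro mult_strict_left_mono) auto
      thus ?thesis unfolding g_def by (simp add: algebra_simps)
    qed
    have g0: "g 0 > 0" unfolding g_def using kb6 c assms by simp
    have gT: "g T2 < 0" unfolding g_def using assms by (simp add: add_pos_pos)
    have cont: "continuous_on {0..T2} g" unfolding g_def by (intro continuous_intros)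
    obtain u v w where uvw: "0 < u" "u < s1" "s1 < v" "v < T2/2" "T2/2 < w" "w < T2"
        "g u = 0" "g v = 0" "g w = 0"
      using three_roots[OF cont s1 _ _ g0 g1 g2 gT] s1T assms by auto
    define st where "st s = (k4 * (T1 * s / ((k4/kb1 + k4/k2) * s^2 + (1 + k3/k2) * s + k3/k5)) * s / kb1,
      (T1 * s / ((k4/kb1 + k4/k2) * s^2 + (1 + k3/k2) * s + k3/k5)) * (k3 + k4 * s) / k2,
      T1 * s / ((k4/kb1 + k4/k2) * s^2 + (1 + k3/k2) * s + k3/k5),
      k3 * (T1 * s / ((k4/kb1 + k4/k2) * s^2 + (1 + k3/k2) * s + k3/k5)) / (k5 * s),
      s, T2 - s)" for s
    have ss: "hhk_pos_steady kb1 k2 k3 k4 k5 kb6 T1 T2 (st s)" if "0 < s" "s < T2" "g s = 0" for s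
      unfolding st_def
      by (rule steady_from_root) (use assms kb1 kb6 that in \<open>auto simp: g_def a b_def c_def\<close>)
    have "distinct [st u, st v, st w]" using uvw unfolding st_def by auto
    moreover have "hhk_pos_steady kb1 k2 k3 k4 k5 kb6 T1 T2 (st u)"
      "hhk_pos_steady kb1 k2 k3 k4 k5 kb6 T1 T2 (st v)"
      "hhk_pos_steady kb1 k2 k3 k4 k5 kb6 T1 T2 (st w)"
      using uvw s1T by (auto intro!: ss)
    ultimately show "let kb1 = inverse (\<beta>1 * (1 / (k1 + k2)) - 1 / k2);
            kb6 = inverse \<beta>2 * k6
        in kb1 > 0 \<and>
           (\<exists>x y z. distinct [x, y, z] \<and> hhk_pos_steady kb1 k2 k3 k4 k5 kb6 T1 T2 x \<and>
              hhk_pos_steady kb1 k2 k3 k4 k5 kb6 T1 T2 y \<and> hhk_pos_steady kb1 k2 k3 k4 k5 kb6 T1 T2 z)"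
      unfolding Let_def kb1_def[symmetric] kb6_def[symmetric] using kb1 by blast
  qed
qed

end
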